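(* Let $1\le k\le m$ and let $\phi_{m,k}$ be the automorphism of the free group $F(A_1,\dots,A_m,B_1,\dots,B_k)$ described below. Then the largest Jordan block in the Jordan normal form of each of the induced automorphisms $\phi_{m,k}^{ab}$ and $(\phi_{m,k}^{-1})^{ab}$ of $\mathbb Z^{m+k}$ has size $k+1$.
   Context: $\phi_{m,k}(A_i)=A_1\cdots A_{i-1}A_iA_{i-1}^{-1}\cdots A_1^{-1}$ for $1\le i\le m$, and $\phi_{m,k}(B_j)=A_1\cdots A_m(B_1\cdots B_j)A_{j-1}^{-1}\cdots A_1^{-1}$ for $1\le j\le k$. $\psi^{ab}$ denotes the automorphism induced on the abelianization, viewed as a matrix in $GL(m+k,\mathbb C)$. *)

theory Defs
  imports "Jordan_Normal_Form.Jordan_Normal_Form"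
begin

text \<open>Generators of the free group F(A_1,...,A_m,B_1,...,B_k).
  A word is a list of letters (g, True) = g and (g, False) = g^{-1}.\<close>

datatype gen = GA nat | GB nat

type_synonym word = "(gen \<times> bool) list"

definition inv_word :: "word \<Rightarrow> word" where
  "inv_word w = rev (map (\<lambda>(g,s). (g, \<not> s)) w)"

text \<open>The automorphism phi_{m,k} on generators (1-based indices).\<close>
fun phi :: "nat \<Rightarrow> nat \<Rightarrow> gen \<Rightarrow> word" where
  "phi m k (GA i) =
     map (\<lambda>l. (GA l, True)) [1..<i] @ [(GA i, True)]
     @ inv_word (map (\<lambda>l. (GA l, True)) [1..<i])"
| "phi m k (GB j) =
     map (\<lambda>l. (GA l, True)) [1..<m+1] @ map (\<lambda>l. (GB l, True)) [1..<j+1]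
     @ inv_word (map (\<lambda>l. (GA l, True)) [1..<j])"

definition exp_sum :: "word \<Rightarrow> gen \<Rightarrow> int" where
  "exp_sum w g = sum_list (map (\<lambda>(h,s). if h = g then (if s then 1 else -1) else 0) w)"

definition gen_of :: "nat \<Rightarrow> nat \<Rightarrow> gen" where
  "gen_of m c = (if c < m then GA (c+1) else GB (c - m + 1))"

definition phi_ab :: "nat \<Rightarrow> nat \<Rightarrow> complex mat" where
  "phi_ab m k = mat (m+k) (m+k)
     (\<lambda>(r,c). of_int (exp_sum (phi m k (gen_of m c)) (gen_of m r)))"

definition max_block :: "(nat \<times> complex) list \<Rightarrow> nat" where
  "max_block n_as = Max (fst ` set n_as)"

end

theory Submission
  imports Defs "Jordan_Normal_Form.Jordan_Normal_Form_Uniqueness"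
begin


lemma exp_sum_append[simp]: "exp_sum (w1@w2) g = exp_sum w1 g + exp_sum w2 g"
  unfolding exp_sum_def by simp

lemma exp_sum_inv[simp]: "exp_sum (inv_word w) g = - exp_sum w g"
  unfolding exp_sum_def inv_word_def
  by (induct w) (auto simp: rev_map[symmetric])

lemma exp_sum_GA: "exp_sum (map (\<lambda>l. (GA l, True)) [a..<b]) g =
   (case g of GA i \<Rightarrow> if a \<le> i \<and> i < b then 1 else 0 | GB _ \<Rightarrow> 0)"
  unfolding exp_sum_def
  by (induct b) (auto split: gen.splits)

lemma exp_sum_GB: "exp_sum (map (\<lambda>l. (GB l, True)) [a..<b]) g =
   (case g of GB i \<Rightarrow> if a \<le> i \<and> i < b then 1 else 0 | GA _ \<Rightarrow> 0)"
  unfolding exp_sum_def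
  by (induct b) (auto split: gen.splits)

lemma exp_sum_single[simp]: "exp_sum [(h,True)] g = (if h = g then 1 else 0)"
  unfolding exp_sum_def by simp

lemma exp_phi_A: "exp_sum (phi m k (GA i)) g = (if g = GA i then 1 else 0)"
  by (simp only: phi.simps exp_sum_append exp_sum_inv exp_sum_single exp_sum_GA)
     (auto split: gen.splits)

lemma exp_phi_B: "1 \<le> j \<Longrightarrow> j \<le> m + 1 \<Longrightarrow> exp_sum (phi m k (GB j)) g = (case g of
   GA i \<Rightarrow> if j \<le> i \<and> i \<le> m then 1 else 0 | GB i \<Rightarrow> if 1 \<le> i \<and> i \<le> j then 1 else 0)"
  by (simp only: phi.simps exp_sum_append exp_sum_inv exp_sum_single exp_sum_GA exp_sum_GB)
     (auto split: gen.splits)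

lemma phi_ab_entry: assumes "r < m+k" "c < m+k" "k \<le> m"
  shows "phi_ab m k $$ (r,c) = (if c < m then (if r = c then 1 else 0)
     else if r < m then (if c \<le> r + m then 1 else 0) else (if r \<le> c then 1 else 0))"
proof -
  have e: "phi_ab m k $$ (r,c) = of_int (exp_sum (phi m k (gen_of m c)) (gen_of m r))"
    using assms by (simp add: phi_ab_def)
  show ?thesis
  proof (cases "c < m")
    case True
    have gc: "gen_of m c = GA (c+1)" using True by (simp add: gen_of_def)
    show ?thesis unfolding e gc exp_phi_A using True assms by (auto simp: gen_of_def)
  next
    case False
    have B: "exp_sum (phi m k (GB (c - m + 1))) g = (case g of
      GA i \<Rightarrow> if c - m + 1 \<le> i \<and> i \<le> m then 1 else 0 | GB i \<Rightarrow> if 1 \<le> i \<and> i \<le> c - m + 1 then 1 else 0)" for g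
      by (rule exp_phi_B) (use assms False in auto)
    show ?thesis
    proof (cases "r < m")
      case True
      have g: "gen_of m c = GB (c - m + 1)" "gen_of m r = GA (r+1)" using False True by (auto simp: gen_of_def)
      show ?thesis unfolding e g B using False True assms by (auto simp del: phi.simps)
    next
      case rF: False
      have g: "gen_of m c = GB (c - m + 1)" "gen_of m r = GB (r - m + 1)" using False rF by (auto simp: gen_of_def)
      show ?thesis unfolding e g B using False rF assms by (auto simp del: phi.simps)
    qed
  qed
qed



lemma char_jordan: "char_matrix (jordan_matrix n_as) e = jordan_matrix (map (\<lambda>(n,a). (n, a - e)) n_as)"
proof (induct n_as)
  case Nil
  show ?case unfolding jordan_matrix_def char_matrix_def by (intro eq_matI, auto)
next
  case (Cons na n_as)
  obtain n a where na: "na = (n,a)" by force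
  let ?s = "sum_list (map fst n_as)"
  have IH: "jordan_matrix (map (\<lambda>(n,a). (n, a - e)) n_as) $$ (i,j) = jordan_matrix n_as $$ (i,j) - (if i = j then e else 0)"
    if "i < ?s" "j < ?s" for i j
    using that Cons[symmetric] by (simp add: char_matrix_def)
  have d2: "fst \<circ> (\<lambda>(n::nat,a). (n, a - e)) = fst" by (auto simp: fun_eq_iff)
  have d: "sum_list (map fst (map (\<lambda>(n,a). (n, a - e)) n_as)) = ?s" by (induct n_as) auto
  show ?case unfolding na
    apply (simp only: list.map prod.case jordan_matrix_Cons d)
    apply (intro eq_matI)
    apply (auto simp: char_matrix_def IH d2)
    done
qed

lemma diag_block_index:
  assumes "\<forall>A\<in>set As. dim_row A = dim_col A" "i < dim_row B" "j < dim_col B"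
  shows "diag_block_mat (As @ B # Cs) $$ (sum_list (map dim_row As) + i, sum_list (map dim_row As) + j) = B $$ (i,j)"
  using assms
proof (induct As)
  case Nil
  then show ?case by (simp add: Let_def)
next
  case (Cons A As)
  have h: "\<forall>A\<in>set As. dim_row A = dim_col A" and hA: "dim_row A = dim_col A" using Cons.prems by auto
  have eq: "sum_list (map dim_col As) = sum_list (map dim_row As)" using h by (induct As) auto
  have IH: "diag_block_mat (As @ B # Cs) $$ (sum_list (map dim_row As) + i, sum_list (map dim_row As) + j) = B $$ (i,j)"
    using Cons.hyps h Cons.prems by auto
  show ?case using IH eq hA Cons.prems by (simp add: Let_def dim_diag_block_mat add.assoc)
qed

lemma diag_block_zero:
  "\<forall>A\<in>set As. A = 0\<^sub>m (dim_row A) (dim_col A) \<Longrightarrow>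
   diag_block_mat As = 0\<^sub>m (sum_list (map dim_row As)) (sum_list (map dim_col As))"
proof (induct As)
  case Nil
  then show ?case by simp
next
  case (Cons A As)
  then have "A = 0\<^sub>m (dim_row A) (dim_col A)" by auto
  with Cons show ?case by (simp add: Let_def dim_diag_block_mat) (metis four_block_zero_mat)
qed

lemma map_dim_pow: "map (\<lambda>x. dim_row (case x of (n,a) \<Rightarrow> jordan_block n a ^\<^sub>m r)) xs = map fst xs"
  "map (\<lambda>x. dim_col (case x of (n,a) \<Rightarrow> jordan_block n a ^\<^sub>m r)) xs = map fst xs"
  by (induct xs) auto

lemma map_dim_K:
  "sum_list (map dim_row (map (\<lambda>(n,a). jordan_block n a ^\<^sub>m r) (map (\<lambda>(n,a). (n, a - e)) xs))) = sum_list (map fst xs)"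
  "sum_list (map dim_col (map (\<lambda>(n,a). jordan_block n a ^\<^sub>m r) (map (\<lambda>(n,a). (n, a - e)) xs))) = sum_list (map fst xs)"
  by (induct xs) auto

lemma jnf_max_block:
  fixes A :: "complex mat"
  assumes A: "A \<in> carrier_mat n n" and jnf: "jordan_nf A n_as" and p: "0 < p"
    and z: "char_matrix A 1 ^\<^sub>m p = 0\<^sub>m n n" and nz: "char_matrix A 1 ^\<^sub>m (p-1) \<noteq> 0\<^sub>m n n"
  shows "max_block n_as = p"
proof -
  from jnf obtain P Q where wit: "similar_mat_wit A (jordan_matrix n_as) P Q"
    and n0: "0 \<notin> fst ` set n_as" unfolding jordan_nf_def similar_mat_def by blast
  let ?K = "map (\<lambda>(n,a). (n, a - 1)) n_as"
  let ?f = "\<lambda>r. (\<lambda>(n,a). jordan_block n a ^\<^sub>m r)"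
  have dA: "dim_row A = n" using A by auto
  from similar_mat_witD[OF refl wit, unfolded dA]
  have J: "jordan_matrix n_as \<in> carrier_mat n n" and P: "P \<in> carrier_mat n n" and Q: "Q \<in> carrier_mat n n"
    by auto
  have sn: "sum_list (map fst n_as) = n" using J by auto
  have pw: "char_matrix A 1 ^\<^sub>m r = P * (jordan_matrix ?K ^\<^sub>m r) * Q" for r
    using similar_mat_wit_pow_id[OF similar_mat_wit_char_matrix[OF wit]] char_jordan by metis
  have pw2: "jordan_matrix ?K ^\<^sub>m r = Q * (char_matrix A 1 ^\<^sub>m r) * P" for r
    using similar_mat_wit_pow_id[OF similar_mat_wit_char_matrix[OF similar_mat_wit_sym[OF wit]]] char_jordan by metis
  have Jp: "jordan_matrix ?K ^\<^sub>m r = diag_block_mat (map (?f r) ?K)" for r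
    by (rule jordan_matrix_pow)
  have iff: "char_matrix A 1 ^\<^sub>m r = 0\<^sub>m n n \<longleftrightarrow> jordan_matrix ?K ^\<^sub>m r = 0\<^sub>m n n" for r
  proof
    assume "char_matrix A 1 ^\<^sub>m r = 0\<^sub>m n n"
    then show "jordan_matrix ?K ^\<^sub>m r = 0\<^sub>m n n" unfolding pw2 using P Q
      by (simp add: left_mult_zero_mat right_mult_zero_mat)
  next
    assume "jordan_matrix ?K ^\<^sub>m r = 0\<^sub>m n n"
    then show "char_matrix A 1 ^\<^sub>m r = 0\<^sub>m n n" unfolding pw using P Q
      by (simp add: left_mult_zero_mat right_mult_zero_mat)
  qed
  have up: "a = 1 \<and> nb \<le> p" if mem: "(nb,a) \<in> set n_as" for nb a
  proof -
    from mem obtain xs ys where nas: "n_as = xs @ (nb,a) # ys" by (meson split_list)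
    have nb0: "nb > 0" using n0 mem by force
    let ?d = "sum_list (map fst xs)"
    have dn: "?d + nb \<le> n" using sn nas by simp
    have Z: "diag_block_mat (map (?f p) ?K) = 0\<^sub>m n n" using z iff Jp by metis
    have ent: "diag_block_mat (map (?f p) ?K) $$ (?d + 0, ?d + j) = (jordan_block nb (a-1) ^\<^sub>m p) $$ (0,j)"
      if "j < nb" for j
    proof -
      have "map (?f p) ?K = map (?f p) (map (\<lambda>(n,a). (n, a - 1)) xs) @ jordan_block nb (a-1) ^\<^sub>m p # map (?f p) (map (\<lambda>(n,a). (n, a - 1)) ys)"
        unfolding nas by simp
      moreover have "sum_list (map dim_row (map (?f p) (map (\<lambda>(n,a). (n, a - 1)) xs))) = ?d"
        by (induct xs) auto
      moreover have "\<forall>B\<in>set (map (?f p) (map (\<lambda>(n,a). (n, a - 1)) xs)). dim_row B = dim_col B" by auto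
      ultimately show ?thesis using diag_block_index[of "map (?f p) (map (\<lambda>(n,a). (n, a - 1)) xs)" 0 "jordan_block nb (a-1) ^\<^sub>m p" j] that nb0
        by simp
    qed
    have "a = 1"
    proof (rule ccontr)
      assume "a \<noteq> 1"
      have "(jordan_block nb (a-1) ^\<^sub>m p) $$ (0,0) = (a-1)^p" using nb0 by (simp add: jordan_block_pow)
      with ent[of 0] nb0 Z dn \<open>a \<noteq> 1\<close> show False by simp
    qed
    moreover have "nb \<le> p"
    proof (rule ccontr)
      assume "\<not> nb \<le> p"
      have "(jordan_block nb (a-1) ^\<^sub>m p) $$ (0,p) = 1" using \<open>\<not> nb \<le> p\<close> by (simp add: jordan_block_pow)
      with ent[of p] Z dn \<open>\<not> nb \<le> p\<close> show False by simp
    qed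
    ultimately show ?thesis by simp
  qed
  have low: "\<exists>nb a. (nb,a) \<in> set n_as \<and> p \<le> nb"
  proof (rule ccontr)
    assume "\<not> ?thesis"
    then have small: "(nb,a) \<in> set n_as \<Longrightarrow> nb < p" for nb a by force
    have "\<forall>B\<in>set (map (?f (p-1)) ?K). B = 0\<^sub>m (dim_row B) (dim_col B)"
    proof
      fix B assume "B \<in> set (map (?f (p-1)) ?K)"
      then obtain nb a where mem: "(nb,a) \<in> set n_as" and B: "B = jordan_block nb (a-1) ^\<^sub>m (p-1)" by auto
      from up[OF mem] small[OF mem] have "a - 1 = 0" "nb \<le> p - 1" by auto
      then show "B = 0\<^sub>m (dim_row B) (dim_col B)" unfolding B
        by (simp add: jordan_block_zero_pow, intro eq_matI, auto)
    qed
    from diag_block_zero[OF this] have "diag_block_mat (map (?f (p-1)) ?K) = 0\<^sub>m n n"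
      unfolding map_dim_K sn .
    with nz iff Jp show False by metis
  qed
  then obtain nb a where mem: "(nb,a) \<in> set n_as" "p \<le> nb" by blast
  with up[OF mem(1)] have "nb = p" by simp
  show ?thesis unfolding max_block_def
  proof (rule Max_eqI)
    show "p \<in> fst ` set n_as" using mem \<open>nb = p\<close> by force
  qed (use up in auto)
qed



lemma mult_entry: assumes "A \<in> carrier_mat n n" "B \<in> carrier_mat n n" "i < n" "j < n"
  shows "(A * B) $$ (i,j) = (\<Sum>l\<in>{0..<n}. A $$ (i,l) * B $$ (l,j))"
  using assms by (simp add: scalar_prod_def)

lemma pow_level_zero:
  fixes E :: "complex mat"
  assumes E: "E \<in> carrier_mat n n"
    and lv: "\<And>r c. r < n \<Longrightarrow> c < n \<Longrightarrow> E $$ (r,c) \<noteq> 0 \<Longrightarrow> lv r < lv c"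
  shows "r < n \<Longrightarrow> c < n \<Longrightarrow> lv c < lv r + q \<Longrightarrow> (E ^\<^sub>m q) $$ (r,c) = 0"
proof (induct q arbitrary: c)
  case 0
  then show ?case using E by auto
next
  case (Suc q)
  have "(E ^\<^sub>m Suc q) $$ (r,c) = (E ^\<^sub>m q * E) $$ (r,c)" by simp
  also have "\<dots> = (\<Sum>l\<in>{0..<n}. (E ^\<^sub>m q) $$ (r,l) * E $$ (l,c))"
    by (rule mult_entry) (use E Suc.prems in auto)
  also have "\<dots> = 0"
  proof (rule sum.neutral, intro ballI)
    fix l assume l: "l \<in> {0..<n}"
    show "(E ^\<^sub>m q) $$ (r,l) * E $$ (l,c) = 0"
    proof (cases "E $$ (l,c) = 0")
      case False
      then have "lv l < lv c" using lv l Suc.prems by auto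
      then have "(E ^\<^sub>m q) $$ (r,l) = 0" using Suc.hyps[of l] Suc.prems l by auto
      then show ?thesis by simp
    qed simp
  qed
  finally show ?case .
qed

definition EE :: "nat \<Rightarrow> nat \<Rightarrow> complex mat" where
  "EE m k = char_matrix (phi_ab m k) 1"

lemma phi_ab_carrier: "phi_ab m k \<in> carrier_mat (m+k) (m+k)"
  by (simp add: phi_ab_def)

lemma EE_carrier: "EE m k \<in> carrier_mat (m+k) (m+k)"
  unfolding EE_def using phi_ab_carrier by simp

lemma EE_entry: assumes "r < m+k" "c < m+k" "k \<le> m"
  shows "EE m k $$ (r,c) = (if m \<le> c \<and> (r < m \<and> c \<le> r+m \<or> m \<le> r \<and> r < c) then 1 else 0)"
proof -
  have "EE m k $$ (r,c) = phi_ab m k $$ (r,c) - (if r = c then 1 else 0)"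
  proof -
    have d: "dim_row (phi_ab m k) = m+k" "dim_col (phi_ab m k) = m+k" using phi_ab_carrier[of m k] by auto
    show ?thesis unfolding EE_def char_matrix_def using assms by (simp add: d)
  qed
  then show ?thesis using phi_ab_entry[OF assms] by auto
qed

lemma EE_pow_zero: assumes "k \<le> m" shows "EE m k ^\<^sub>m (k+1) = 0\<^sub>m (m+k) (m+k)"
proof (rule eq_matI)
  let ?lv = "\<lambda>r. if r < m then 0 else r - m + 1"
  fix r c assume rc: "r < dim_row (0\<^sub>m (m+k) (m+k) :: complex mat)" "c < dim_col (0\<^sub>m (m+k) (m+k) :: complex mat)"
  have "(EE m k ^\<^sub>m (k+1)) $$ (r,c) = 0"
  proof (rule pow_level_zero[OF EE_carrier, where lv = "\<lambda>r. if r < m then 0 else r - m + 1"])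
    fix r c assume "r < m + k" "c < m + k" "EE m k $$ (r, c) \<noteq> 0"
    then show "?lv r < ?lv c" using EE_entry[of r m k c] assms by (auto split: if_splits)
  qed (use rc in auto)
  then show "(EE m k ^\<^sub>m (k+1)) $$ (r,c) = 0\<^sub>m (m+k) (m+k) $$ (r,c)" using rc by simp
qed (use EE_carrier in auto)

lemma EE_chain: assumes "k \<le> m" "r < m"
  shows "1 \<le> q \<Longrightarrow> q \<le> k \<Longrightarrow> (EE m k ^\<^sub>m q) $$ (r, m+q-1) = 1"
proof (induct q rule: nat_induct_at_least)
  case base
  have "EE m k ^\<^sub>m 1 = EE m k" using EE_carrier by simp
  then show ?case using EE_entry[of r m k m] assms base by simp
next
  case (Suc q)
  let ?E = "EE m k"
  let ?lv = "\<lambda>r. if r < m then 0 else r - m + 1"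
  have E: "?E \<in> carrier_mat (m+k) (m+k)" by (rule EE_carrier)
  have lvz: "(?E ^\<^sub>m q) $$ (r,l) = 0" if "l < m+k" "?lv l < q" for l
  proof (rule pow_level_zero[OF E, where lv = "\<lambda>r. if r < m then 0 else r - m + 1"])
    fix r c assume "r < m + k" "c < m + k" "EE m k $$ (r, c) \<noteq> 0"
    then show "?lv r < ?lv c" using EE_entry[of r m k c] assms by (auto split: if_splits)
  qed (use that assms in auto)
  have "(?E ^\<^sub>m Suc q) $$ (r, m + Suc q - 1) = (?E ^\<^sub>m q * ?E) $$ (r, m+q)" by simp
  also have "\<dots> = (\<Sum>l\<in>{0..<m+k}. (?E ^\<^sub>m q) $$ (r,l) * ?E $$ (l,m+q))"
    by (rule mult_entry) (use E Suc assms in auto)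
  also have "\<dots> = (?E ^\<^sub>m q) $$ (r,m+q-1) * ?E $$ (m+q-1,m+q) +
      (\<Sum>l\<in>{0..<m+k} - {m+q-1}. (?E ^\<^sub>m q) $$ (r,l) * ?E $$ (l,m+q))"
    by (rule sum.remove) (use Suc assms in auto)
  also have "(\<Sum>l\<in>{0..<m+k} - {m+q-1}. (?E ^\<^sub>m q) $$ (r,l) * ?E $$ (l,m+q)) = 0"
  proof (rule sum.neutral, intro ballI)
    fix l assume l: "l \<in> {0..<m+k} - {m+q-1}"
    show "(?E ^\<^sub>m q) $$ (r,l) * ?E $$ (l,m+q) = 0"
    proof (cases "?E $$ (l,m+q) = 0")
      case False
      then have "?lv l < q" using EE_entry[of l m k "m+q"] l Suc assms by (auto split: if_splits)
      then show ?thesis using lvz[of l] l by simp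
    qed simp
  qed
  also have "?E $$ (m+q-1,m+q) = 1" using EE_entry[of "m+q-1" m k "m+q"] Suc assms by auto
  finally show ?case using Suc by simp
qed

lemma EE_pow_nz: assumes "1 \<le> k" "k \<le> m" shows "EE m k ^\<^sub>m k \<noteq> 0\<^sub>m (m+k) (m+k)"
proof
  assume "EE m k ^\<^sub>m k = 0\<^sub>m (m+k) (m+k)"
  then have "(EE m k ^\<^sub>m k) $$ (0, m+k-1) = 0" using assms by simp
  moreover have "(EE m k ^\<^sub>m k) $$ (0, m+k-1) = 1" using EE_chain[of k m 0 k] assms by simp
  ultimately show False by simp
qed

lemma comm_pow: assumes A: "A \<in> carrier_mat n n" and B: "B \<in> carrier_mat n n" and AB: "A * B = B * A"
  shows "B * A ^\<^sub>m q = A ^\<^sub>m q * B"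
proof (induct q)
  case 0
  then show ?case using A B by simp
next
  case (Suc q)
  have Aq: "A ^\<^sub>m q \<in> carrier_mat n n" using A by simp
  have "B * A ^\<^sub>m Suc q = B * (A ^\<^sub>m q * A)" by simp
  also have "\<dots> = (B * A ^\<^sub>m q) * A" using assoc_mult_mat[OF B Aq A] by simp
  also have "\<dots> = (A ^\<^sub>m q * B) * A" unfolding Suc ..
  also have "\<dots> = A ^\<^sub>m q * (B * A)" using assoc_mult_mat[OF Aq B A] by simp
  also have "\<dots> = A ^\<^sub>m q * (A * B)" unfolding AB ..
  also have "\<dots> = (A ^\<^sub>m q * A) * B" using assoc_mult_mat[OF Aq A B] by simp
  also have "\<dots> = A ^\<^sub>m Suc q * B" by simp
  finally show ?case .
qed

lemma pow_mult_comm: assumes A: "A \<in> carrier_mat n n" and B: "B \<in> carrier_mat n n" and AB: "A * B = B * A"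
  shows "(A * B) ^\<^sub>m q = A ^\<^sub>m q * B ^\<^sub>m q"
proof (induct q)
  case 0
  then show ?case using A B by simp
next
  case (Suc q)
  have Aq: "A ^\<^sub>m q \<in> carrier_mat n n" and Bq: "B ^\<^sub>m q \<in> carrier_mat n n" using A B by auto
  have c: "A * B ^\<^sub>m q = B ^\<^sub>m q * A" by (rule comm_pow[OF B A AB[symmetric]])
  have AB': "A * B \<in> carrier_mat n n" using A B by simp
  have BB: "B ^\<^sub>m q * B \<in> carrier_mat n n" by (rule mult_carrier_mat[OF Bq B])
  have "(A * B) ^\<^sub>m Suc q = (A ^\<^sub>m q * B ^\<^sub>m q) * (A * B)" using Suc by simp
  also have "\<dots> = A ^\<^sub>m q * (B ^\<^sub>m q * (A * B))" using assoc_mult_mat[OF Aq Bq AB'] by simp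
  also have "\<dots> = A ^\<^sub>m q * ((B ^\<^sub>m q * A) * B)" using assoc_mult_mat[OF Bq A B] by simp
  also have "\<dots> = A ^\<^sub>m q * ((A * B ^\<^sub>m q) * B)" unfolding c ..
  also have "\<dots> = A ^\<^sub>m q * (A * (B ^\<^sub>m q * B))" using assoc_mult_mat[OF A Bq B] by simp
  also have "\<dots> = (A ^\<^sub>m q * A) * (B ^\<^sub>m q * B)" using assoc_mult_mat[OF Aq A BB] by simp
  also have "\<dots> = A ^\<^sub>m Suc q * B ^\<^sub>m Suc q" by simp
  finally show ?case .
qed

lemma pow_smult: assumes A: "(A :: complex mat) \<in> carrier_mat n n"
  shows "(c \<cdot>\<^sub>m A) ^\<^sub>m q = c ^ q \<cdot>\<^sub>m (A ^\<^sub>m q)"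
proof (induct q)
  case 0
  then show ?case using A by (intro eq_matI) auto
next
  case (Suc q)
  have Aq: "A ^\<^sub>m q \<in> carrier_mat n n" using A by auto
  have "(c \<cdot>\<^sub>m A) ^\<^sub>m Suc q = (c ^ q \<cdot>\<^sub>m (A ^\<^sub>m q)) * (c \<cdot>\<^sub>m A)" using Suc by simp
  also have "\<dots> = c ^ Suc q \<cdot>\<^sub>m (A ^\<^sub>m q * A)"
    using A Aq by (intro eq_matI) (auto simp: scalar_prod_def sum_distrib_left mult_ac)
  finally show ?case by simp
qed

lemma inv_nil: fixes X Y :: "complex mat"
  assumes X: "X \<in> carrier_mat n n" and Y: "Y \<in> carrier_mat n n" and XY: "X * Y = 1\<^sub>m n" and YX: "Y * X = 1\<^sub>m n"
    and z: "char_matrix X 1 ^\<^sub>m q = 0\<^sub>m n n"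
  shows "char_matrix Y 1 ^\<^sub>m q = 0\<^sub>m n n"
proof -
  let ?EX = "char_matrix X 1" and ?EY = "char_matrix Y 1"
  have EX: "?EX \<in> carrier_mat n n" and EY: "?EY \<in> carrier_mat n n" using X Y by auto
  have sm: "(-1) \<cdot>\<^sub>m 1\<^sub>m n \<in> carrier_mat n n" by simp
  have eX: "?EX = X + (-1) \<cdot>\<^sub>m 1\<^sub>m n" unfolding char_matrix_def using X by simp
  have "?EX * Y = X * Y + ((-1) \<cdot>\<^sub>m 1\<^sub>m n) * Y" unfolding eX by (rule add_mult_distrib_mat[OF X sm Y])
  also have "((-1) \<cdot>\<^sub>m 1\<^sub>m n) * Y = (-1) \<cdot>\<^sub>m Y" using mult_smult_assoc_mat[OF one_carrier_mat Y] Y by simp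
  finally have EXY: "?EX * Y = 1\<^sub>m n + (-1) \<cdot>\<^sub>m Y" unfolding XY .
  have "Y * ?EX = Y * X + Y * ((-1) \<cdot>\<^sub>m 1\<^sub>m n)" unfolding eX by (rule mult_add_distrib_mat[OF Y X sm])
  also have "Y * ((-1) \<cdot>\<^sub>m 1\<^sub>m n) = (-1) \<cdot>\<^sub>m Y" using mult_smult_distrib[OF Y one_carrier_mat] Y by simp
  finally have YEX: "Y * ?EX = 1\<^sub>m n + (-1) \<cdot>\<^sub>m Y" unfolding YX .
  have EYe: "?EY = (-1) \<cdot>\<^sub>m (?EX * Y)" unfolding EXY unfolding char_matrix_def using Y by (intro eq_matI) auto
  have "?EY ^\<^sub>m q = (-1) ^ q \<cdot>\<^sub>m ((?EX * Y) ^\<^sub>m q)" unfolding EYe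
    by (rule pow_smult) (use EX Y in auto)
  also have "(?EX * Y) ^\<^sub>m q = ?EX ^\<^sub>m q * Y ^\<^sub>m q"
    by (rule pow_mult_comm[OF EX Y]) (simp add: EXY YEX)
  also have "\<dots> = 0\<^sub>m n n" unfolding z using Y by (simp add: left_mult_zero_mat)
  finally show ?thesis by (intro eq_matI) auto
qed

theorem claim8p13:
  fixes m k :: nat
  assumes "1 \<le> k" and "k \<le> m"
  shows "(\<forall>n_as. jordan_nf (phi_ab m k) n_as \<longrightarrow> max_block n_as = k + 1)
    \<and> (\<forall>N \<in> carrier_mat (m+k) (m+k). phi_ab m k * N = 1\<^sub>m (m+k) \<and> N * phi_ab m k = 1\<^sub>m (m+k) \<longrightarrow>
         (\<forall>n_as. jordan_nf N n_as \<longrightarrow> max_block n_as = k + 1))"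
proof (intro conjI allI impI ballI)
  have z: "char_matrix (phi_ab m k) 1 ^\<^sub>m (k+1) = 0\<^sub>m (m+k) (m+k)"
    using EE_pow_zero[OF assms(2)] unfolding EE_def .
  have nz: "char_matrix (phi_ab m k) 1 ^\<^sub>m (k+1-1) \<noteq> 0\<^sub>m (m+k) (m+k)"
    using EE_pow_nz[OF assms] unfolding EE_def by simp
  fix n_as assume "jordan_nf (phi_ab m k) n_as"
  from jnf_max_block[OF phi_ab_carrier this _ z nz] show "max_block n_as = k + 1" by simp
next
  fix N n_as assume N: "N \<in> carrier_mat (m+k) (m+k)"
    and inv: "phi_ab m k * N = 1\<^sub>m (m+k) \<and> N * phi_ab m k = 1\<^sub>m (m+k)" and jnf: "jordan_nf N n_as"
  have z: "char_matrix (phi_ab m k) 1 ^\<^sub>m (k+1) = 0\<^sub>m (m+k) (m+k)"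
    using EE_pow_zero[OF assms(2)] unfolding EE_def .
  have nz: "char_matrix (phi_ab m k) 1 ^\<^sub>m k \<noteq> 0\<^sub>m (m+k) (m+k)"
    using EE_pow_nz[OF assms] unfolding EE_def by simp
  have zN: "char_matrix N 1 ^\<^sub>m (k+1) = 0\<^sub>m (m+k) (m+k)"
    using inv_nil[OF phi_ab_carrier N _ _ z] inv by auto
  have nzN: "char_matrix N 1 ^\<^sub>m (k+1-1) \<noteq> 0\<^sub>m (m+k) (m+k)"
  proof
    assume "char_matrix N 1 ^\<^sub>m (k+1-1) = 0\<^sub>m (m+k) (m+k)"
    then have "char_matrix (phi_ab m k) 1 ^\<^sub>m k = 0\<^sub>m (m+k) (m+k)"
      using inv_nil[OF N phi_ab_carrier] inv by auto
    with nz show False by simp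
  qed
  from jnf_max_block[OF N jnf _ zN nzN] show "max_block n_as = k + 1" by simp
qed

end
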